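(* Let $G$ be the corresponding graph of an array $A$ with $n$ elements and reach one, and let $F$ be a resulting DFS forest of $G$. Merge the sub-trees of $F$, then apply the merge step to the resulting graph with the list of roots of $F$ (in some order); let $H$ be the resulting graph and $R$ the returned root list. Run DFS on $H$ with visiting list $R$, and let $F'$ be the resulting DFS forest. Then all components of $F'$ are directed paths.
   Context: An array is a finite sequence $A=(A[1],\dots,A[n])$ of pairwise distinct real numbers. A comparison graph on $A$ is a directed graph on $\{1,\dots,n\}$ all of whose arcs $(u,v)$ satisfy $A[u]<A[v]$. The corresponding graph of $A$ with reach one has an arc $(i,j)$ whenever $j\equiv i\pm1\pmod n$, $j\ne i$, and $A[i]<A[j]$. Components are connected components of the underlying undirected graph. DFS: adjacency lists sorted in increasing $A$-value; given a visiting list $(l_1,\dots,l_m)$ (for $F$, some ordering of all vertices), for each unvisited $l_t$ call Visit$(l_t)$, where Visit$(u)$ marks $u$ and, for each out-neighbour $w$ of $u$ in increasing $A$-value that is unvisited, sets parent$(w)=u$ and calls Visit$(w)$. The resulting DFS forest has arcs $(\mathrm{parent}(w),w)$; its roots are the vertices without parent. Merging the sub-trees of $F$: for each component of $F$ whose root has exactly two children $a_1,b_1$, set $p=a_1,q=b_1$ and, while both are defined: if $A[p]<A[q]$ add $(p,q)$ and replace $p$ by its smallest-valued child in $F$ (undefined if none); else add $(q,p)$ and replace $q$ likewise. Component merge of components $C,D$: set $p,q$ to the minimum-valued vertices of $C,D$; while both defined: if $A[p]<A[q]$ add $(p,q)$ and replace $p$ by the smallest-valued out-neighbour of $p$ within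 $C$ (ignoring arcs added in this merge; undefined if none); else add $(q,p)$ and replace $q$ analogously in $D$. Merge step with root list $(\rho_1,\dots,\rho_k)$ (the minimum-valued vertices of the components): component-merge the components of $\rho_{2j-1},\rho_{2j}$ for $j=1,\dots,\lfloor k/2\rfloor$ and return the list obtained by deleting the larger-valued root of each merged pair. *)

theory Defs
  imports Complex_Main
begin

type_synonym arcs = "(nat \<times> nat) set"

text \<open>Array: A :: nat => real on indices 1..n, pairwise distinct values.\<close>

definition reach_one_graph :: "(nat \<Rightarrow> real) \<Rightarrow> nat \<Rightarrow> arcs" where
  "reach_one_graph A n = {(i, j). i \<in> {1..n} \<and> j \<in> {1..n} \<and> j \<noteq> i \<and>
      (j mod n = (i + 1) mod n \<or> (j + 1) mod n = i mod n) \<and> A i < A j}"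

definition out_list :: "(nat \<Rightarrow> real) \<Rightarrow> arcs \<Rightarrow> nat \<Rightarrow> nat list" where
  "out_list A E u = sorted_key_list_of_set A {w. (u, w) \<in> E}"

text \<open>DFS, big-step semantics. State = (visited set, parent arcs).\<close>
inductive dfs_visit :: "(nat \<Rightarrow> real) \<Rightarrow> arcs \<Rightarrow> nat \<Rightarrow> nat set \<times> arcs \<Rightarrow> nat set \<times> arcs \<Rightarrow> bool"
  and dfs_loop :: "(nat \<Rightarrow> real) \<Rightarrow> arcs \<Rightarrow> nat \<Rightarrow> nat list \<Rightarrow> nat set \<times> arcs \<Rightarrow> nat set \<times> arcs \<Rightarrow> bool"
  for A :: "nat \<Rightarrow> real" and E :: arcs where
  visit: "dfs_loop A E u (out_list A E u) (insert u S, P) st'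
          \<Longrightarrow> dfs_visit A E u (S, P) st'"
| loop_nil: "dfs_loop A E u [] st st"
| loop_seen: "w \<in> S \<Longrightarrow> dfs_loop A E u ws (S, P) st'
          \<Longrightarrow> dfs_loop A E u (w # ws) (S, P) st'"
| loop_new: "w \<notin> S \<Longrightarrow> dfs_visit A E w (S, insert (u, w) P) st1 \<Longrightarrow> dfs_loop A E u ws st1 st'
          \<Longrightarrow> dfs_loop A E u (w # ws) (S, P) st'"

inductive dfs_run :: "(nat \<Rightarrow> real) \<Rightarrow> arcs \<Rightarrow> nat list \<Rightarrow> nat set \<times> arcs \<Rightarrow> nat set \<times> arcs \<Rightarrow> bool"
  for A :: "nat \<Rightarrow> real" and E :: arcs where
  run_nil: "dfs_run A E [] st st"
| run_seen: "l \<in> S \<Longrightarrow> dfs_run A E ls (S, P) st' \<Longrightarrow> dfs_run A E (l # ls) (S, P) st'"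
| run_new: "l \<notin> S \<Longrightarrow> dfs_visit A E l (S, P) st1 \<Longrightarrow> dfs_run A E ls st1 st'
          \<Longrightarrow> dfs_run A E (l # ls) (S, P) st'"

definition dfs_forest :: "(nat \<Rightarrow> real) \<Rightarrow> arcs \<Rightarrow> nat list \<Rightarrow> arcs \<Rightarrow> bool" where
  "dfs_forest A E L F \<longleftrightarrow> (\<exists>S. dfs_run A E L ({}, {}) (S, F))"

definition forest_roots :: "nat set \<Rightarrow> arcs \<Rightarrow> nat set" where
  "forest_roots V F = {r \<in> V. \<not> (\<exists>u. (u, r) \<in> F)}"

definition min_valued :: "(nat \<Rightarrow> real) \<Rightarrow> nat set \<Rightarrow> nat option" where
  "min_valued A X = (if X = {} then None else Some (arg_min_on A X))"

definition children :: "arcs \<Rightarrow> nat \<Rightarrow> nat set" where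
  "children F u = {w. (u, w) \<in> F}"

text \<open>The common merging walk: nxtP / nxtQ give the replacement of p / q.
  X is the set of arcs added.\<close>
inductive merge_walk :: "(nat \<Rightarrow> real) \<Rightarrow> (nat \<Rightarrow> nat option) \<Rightarrow> (nat \<Rightarrow> nat option)
    \<Rightarrow> nat option \<Rightarrow> nat option \<Rightarrow> arcs \<Rightarrow> bool"
  for A :: "nat \<Rightarrow> real" and nxtP nxtQ where
  stopP: "merge_walk A nxtP nxtQ None q {}"
| stopQ: "merge_walk A nxtP nxtQ p None {}"
| advP: "A p < A q \<Longrightarrow> merge_walk A nxtP nxtQ (nxtP p) (Some q) X
          \<Longrightarrow> merge_walk A nxtP nxtQ (Some p) (Some q) (insert (p, q) X)"
| advQ: "\<not> A p < A q \<Longrightarrow> merge_walk A nxtP nxtQ (Some p) (nxtQ q) X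
          \<Longrightarrow> merge_walk A nxtP nxtQ (Some p) (Some q) (insert (q, p) X)"

definition merge_subtrees :: "(nat \<Rightarrow> real) \<Rightarrow> nat set \<Rightarrow> arcs \<Rightarrow> arcs \<Rightarrow> bool" where
  "merge_subtrees A V F H1 \<longleftrightarrow>
     (\<exists>X :: nat \<Rightarrow> arcs.
        (\<forall>r \<in> forest_roots V F. card (children F r) = 2 \<longrightarrow>
           (\<exists>a b. children F r = {a, b} \<and>
              merge_walk A (\<lambda>p. min_valued A (children F p)) (\<lambda>p. min_valued A (children F p))
                (Some a) (Some b) (X r)))
      \<and> H1 = F \<union> (\<Union>r \<in> {r \<in> forest_roots V F. card (children F r) = 2}. X r))"

definition ucomp :: "arcs \<Rightarrow> nat \<Rightarrow> nat set" where
  "ucomp K v = {w. (v, w) \<in> (K \<union> K\<inverse>)\<^sup>*}"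

definition next_in :: "(nat \<Rightarrow> real) \<Rightarrow> arcs \<Rightarrow> nat set \<Rightarrow> nat \<Rightarrow> nat option" where
  "next_in A K C p = min_valued A {w \<in> C. (p, w) \<in> K}"

inductive merge_step :: "(nat \<Rightarrow> real) \<Rightarrow> arcs \<Rightarrow> nat list \<Rightarrow> arcs \<Rightarrow> nat list \<Rightarrow> bool"
  for A :: "nat \<Rightarrow> real" where
  ms_nil: "merge_step A K [] K []"
| ms_single: "merge_step A K [r] K [r]"
| ms_pair: "merge_walk A (next_in A K (ucomp K r1)) (next_in A K (ucomp K r2))
              (min_valued A (ucomp K r1)) (min_valued A (ucomp K r2)) X
            \<Longrightarrow> merge_step A (K \<union> X) rs K' R
            \<Longrightarrow> merge_step A K (r1 # r2 # rs) K' ((if A r1 < A r2 then r1 else r2) # R)"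

definition is_dipath :: "arcs \<Rightarrow> nat set \<Rightarrow> bool" where
  "is_dipath E C \<longleftrightarrow> (\<exists>vs. distinct vs \<and> set vs = C \<and>
      {(u, w) \<in> E. u \<in> C \<or> w \<in> C} = set (zip vs (tl vs)))"

end

theory Submission
  imports Defs
begin

abbreviation sc :: "arcs \<Rightarrow> arcs" where "sc K \<equiv> (K \<union> K\<inverse>)\<^sup>*"

lemma sc_sym: "(u,w) \<in> sc K \<Longrightarrow> (w,u) \<in> sc K"
proof (induction rule: rtrancl_induct)
  case base then show ?case by simp
next
  case (step y z)
  then have "(z,y) \<in> K \<union> K\<inverse>" by auto
  then show ?case using step(3) by (meson converse_rtrancl_into_rtrancl)
qed

lemma sc_trans: "(u,v) \<in> sc K \<Longrightarrow> (v,w) \<in> sc K \<Longrightarrow> (u,w) \<in> sc K"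
  by (meson rtrancl_trans)

lemma sc_mono: "K \<subseteq> K' \<Longrightarrow> (u,w) \<in> sc K \<Longrightarrow> (u,w) \<in> sc K'"
  by (metis Un_mono converse_mono rtrancl_mono subsetD)

lemma sc_arc: "(u,w) \<in> K \<Longrightarrow> (u,w) \<in> sc K" "(w,u) \<in> K \<Longrightarrow> (u,w) \<in> sc K"
  by auto

lemma sc_V: assumes "K \<subseteq> V \<times> V" "(u,w) \<in> sc K" "u \<noteq> w" shows "u \<in> V \<and> w \<in> V"
proof -
  have "w = u \<or> (u \<in> V \<and> w \<in> V)" using assms(2)
    by (induction rule: rtrancl_induct) (use assms(1) in auto)
  then show ?thesis using assms(3) by auto
qed

lemma sc_closed:
  assumes "\<And>x y. x \<in> T \<Longrightarrow> (x,y) \<in> K \<or> (y,x) \<in> K \<Longrightarrow> y \<in> T"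
    and "u \<in> T" "(u,w) \<in> sc K"
  shows "w \<in> T"
  using assms(3,2) by (induction rule: rtrancl_induct) (use assms(1) in blast)+

lemma ucomp_sc: "ucomp K u = {w. (u,w) \<in> sc K}"
  by (simp add: ucomp_def)

definition ginv :: "arcs \<Rightarrow> nat set \<Rightarrow> arcs \<Rightarrow> bool" where
  "ginv E S P \<longleftrightarrow> P \<subseteq> E \<and> (\<forall>x y. (x,y) \<in> P \<longrightarrow> y \<in> S) \<and> (\<forall>x x' y. (x,y)\<in>P \<longrightarrow> (x',y)\<in>P \<longrightarrow> x = x')"

lemma dfs_G_inv:
  assumes outs: "\<And>u. set (out_list A E u) \<subseteq> {w. (u,w) \<in> E}"
  shows "dfs_visit A E u st st' \<Longrightarrow> ginv E (insert u (fst st)) (snd st) \<Longrightarrow> ginv E (fst st') (snd st')"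
    and "dfs_loop A E u ws st st' \<Longrightarrow> set ws \<subseteq> {w. (u,w) \<in> E} \<Longrightarrow> ginv E (fst st) (snd st) \<Longrightarrow> ginv E (fst st') (snd st')"
proof (induction rule: dfs_visit_dfs_loop.inducts)
  case (visit u S P st')
  then show ?case using outs by simp
next
  case (loop_nil u st)
  then show ?case by simp
next
  case (loop_seen w S u ws P st')
  then show ?case by simp
next
  case (loop_new w S u P st1 ws st')
  have "ginv E (insert w S) (insert (u,w) P)"
    using loop_new.prems loop_new.hyps(1) unfolding ginv_def by auto
  then have "ginv E (fst st1) (snd st1)" using loop_new.IH(2) by auto
  then show ?case using loop_new.IH(4) loop_new.prems by simp
qed

lemma dfs_run_G_inv:
  assumes outs: "\<And>u. set (out_list A E u) \<subseteq> {w. (u,w) \<in> E}"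
  shows "dfs_run A E ls st st' \<Longrightarrow> ginv E (fst st) (snd st) \<Longrightarrow> ginv E (fst st') (snd st')"
proof (induction rule: dfs_run.induct)
  case (run_new l S P st1 ls st')
  have "ginv E (insert l S) P" using run_new.prems unfolding ginv_def by auto
  then have "ginv E (fst st1) (snd st1)" using dfs_G_inv(1)[OF outs run_new.hyps(2)] by simp
  then show ?case using run_new.IH by simp
qed auto

context linorder begin
lemma skl_gen:
  assumes "inj_on f S" "X \<subseteq> S" "finite X"
  shows "set (sorted_key_list_of_set f X) = X \<and> sorted_wrt (<) (map f (sorted_key_list_of_set f X))"
proof -
  interpret folding_insort_key "(\<le>)" "(<)" S f by unfold_locales (rule assms(1))
  show ?thesis using assms by simp
qed
end

lemma skl_props:
  fixes A :: "nat \<Rightarrow> real"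
  assumes "inj_on A V" "X \<subseteq> V" "finite X"
  shows "set (sorted_key_list_of_set A X) = X"
    and "sorted_wrt (\<lambda>x y. A x < A y) (sorted_key_list_of_set A X)"
    and "distinct (sorted_key_list_of_set A X)"
proof -
  note h = skl_gen[OF assms]
  show "set (sorted_key_list_of_set A X) = X" using h by simp
  show s: "sorted_wrt (\<lambda>x y. A x < A y) (sorted_key_list_of_set A X)"
    using h by (simp add: sorted_wrt_map)
  have "distinct (map A (sorted_key_list_of_set A X))" using h strict_sorted_iff by blast
  then show "distinct (sorted_key_list_of_set A X)" by (simp add: distinct_map)
qed

lemma out_list_set:
  fixes A :: "nat \<Rightarrow> real"
  assumes "inj_on A V" "E \<subseteq> V \<times> V" "finite V"
  shows "set (out_list A E u) = {w. (u,w) \<in> E}"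
proof -
  have "{w. (u,w) \<in> E} \<subseteq> V" using assms(2) by auto
  moreover then have "finite {w. (u,w) \<in> E}" using assms(3) finite_subset by blast
  ultimately show ?thesis unfolding out_list_def using skl_props(1)[OF assms(1)] by blast
qed

definition pre :: "(nat \<Rightarrow> real) \<Rightarrow> nat set \<Rightarrow> nat option \<Rightarrow> real \<Rightarrow> bool" where
  "pre A C po th \<longleftrightarrow> (case po of None \<Rightarrow> (\<forall>c\<in>C. A c < th)
      | Some p \<Rightarrow> p \<in> C \<and> th \<le> A p \<and> (\<forall>c\<in>C. th \<le> A c \<longrightarrow> A p \<le> A c))"

definition succ_fun :: "(nat \<Rightarrow> real) \<Rightarrow> arcs \<Rightarrow> nat set \<Rightarrow> (nat \<Rightarrow> nat option) \<Rightarrow> bool" where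
  "succ_fun A K C nP \<longleftrightarrow> (\<forall>p\<in>C. case nP p of None \<Rightarrow> (\<forall>c\<in>C. A c \<le> A p)
      | Some p' \<Rightarrow> (p,p') \<in> K \<and> p' \<in> C \<and> A p < A p' \<and> (\<forall>c\<in>C. A p < A c \<longrightarrow> A p' \<le> A c))"

definition msucc :: "(nat \<Rightarrow> real) \<Rightarrow> nat set \<Rightarrow> nat \<Rightarrow> nat \<Rightarrow> bool" where
  "msucc A M u t \<longleftrightarrow> t \<in> M \<and> A u < A t \<and> (\<forall>z\<in>M. A u < A z \<longrightarrow> A t \<le> A z)"

definition wconcl :: "(nat \<Rightarrow> real) \<Rightarrow> arcs \<Rightarrow> nat set \<Rightarrow> nat set \<Rightarrow> arcs \<Rightarrow> real \<Rightarrow> bool" where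
  "wconcl A K C D X th \<longleftrightarrow> (\<forall>x y. (x,y)\<in>X \<longrightarrow> ((x\<in>C \<and> y\<in>D) \<or> (x\<in>D \<and> y\<in>C)) \<and> A x < A y)
     \<and> (\<forall>u\<in>C\<union>D. \<forall>t. th \<le> A u \<longrightarrow> msucc A (C\<union>D) u t \<longrightarrow> (u,t) \<in> K \<union> X)"

lemma wconcl_sym: "wconcl A K C D X th = wconcl A K D C X th"
  unfolding wconcl_def by (auto simp: Un_commute)

lemma succ_step:
  assumes "succ_fun A K C nP" "u \<in> C" "t \<in> C" "msucc A M u t" "C \<subseteq> M" "inj_on A M"
  shows "(u,t) \<in> K"
proof (cases "nP u")
  case None
  then show ?thesis using assms unfolding succ_fun_def msucc_def by fastforce
next
  case (Some u')
  then have h: "(u,u') \<in> K" "u' \<in> C" "A u < A u'" "\<forall>c\<in>C. A u < A c \<longrightarrow> A u' \<le> A c"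
    using assms(1,2) unfolding succ_fun_def by auto
  have "A t \<le> A u'" using assms(4,5) h unfolding msucc_def by auto
  moreover have "A u' \<le> A t" using h(4) assms(3,4) unfolding msucc_def by auto
  ultimately have "A t = A u'" by simp
  then have "t = u'" using assms(6) assms(5) h(2) assms(3) by (meson inj_onD subsetD)
  then show ?thesis using h by simp
qed

lemma walk_stop:
  assumes "inj_on A (C \<union> D)" "succ_fun A K D nQ" "pre A C None th"
  shows "wconcl A K C D {} th"
proof -
  have "(u,t) \<in> K" if u: "u \<in> C \<union> D" and th: "th \<le> A u" and ms: "msucc A (C \<union> D) u t" for u t
  proof -
    have "u \<in> D" using u th assms(3) unfolding pre_def by force
    moreover have "t \<in> D" using ms th assms(3) unfolding pre_def msucc_def by force
    ultimately show ?thesis using succ_step[OF assms(2) _ _ ms _ assms(1)] by auto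
  qed
  then show ?thesis unfolding wconcl_def by auto
qed

lemma walk_step:
  assumes inj: "inj_on A (C \<union> D)" and disj: "C \<inter> D = {}" and sf: "succ_fun A K C nP"
    and prp: "pre A C (Some p) th" and prq: "pre A D (Some q) th" and pq: "A p < A q"
    and IH: "\<And>th'. pre A C (nP p) th' \<Longrightarrow> pre A D (Some q) th' \<Longrightarrow> wconcl A K C D X th'"
  shows "wconcl A K C D (insert (p,q) X) th"
proof -
  have p: "p \<in> C" "th \<le> A p" "\<forall>c\<in>C. th \<le> A c \<longrightarrow> A p \<le> A c" using prp unfolding pre_def by auto
  have q: "q \<in> D" "th \<le> A q" "\<forall>c\<in>D. th \<le> A c \<longrightarrow> A q \<le> A c" using prq unfolding pre_def by auto
  let ?M = "C \<union> D"
  have injM: "\<And>x y. x \<in> ?M \<Longrightarrow> y \<in> ?M \<Longrightarrow> A x = A y \<Longrightarrow> x = y" using inj by (meson inj_onD)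
  show ?thesis
  proof (cases "nP p")
    case None
    then have allC: "\<forall>c\<in>C. A c \<le> A p" using sf p(1) unfolding succ_fun_def by force
    have "pre A C (nP p) (A q)" using None allC pq unfolding pre_def by force
    moreover have "pre A D (Some q) (A q)" using q unfolding pre_def by auto
    ultimately have W: "wconcl A K C D X (A q)" using IH by blast
    show ?thesis unfolding wconcl_def
    proof (rule conjI; intro allI impI ballI)
      fix x y assume "(x,y) \<in> insert (p,q) X"
      then show "((x\<in>C \<and> y\<in>D) \<or> (x\<in>D \<and> y\<in>C)) \<and> A x < A y"
        using W p q pq unfolding wconcl_def by auto
    next
      fix u t assume u: "u \<in> ?M" and th: "th \<le> A u" and ms: "msucc A ?M u t"
      show "(u,t) \<in> K \<union> insert (p,q) X"
      proof (cases "A q \<le> A u")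
        case True then show ?thesis using W u ms unfolding wconcl_def by auto
      next
        case False
        then have "u \<in> C" using u th q by force
        then have "A u = A p" using allC p th by force
        then have up: "u = p" using injM \<open>u \<in> C\<close> p(1) by blast
        have tM: "t \<in> ?M" "A p < A t" "A t \<le> A q" using ms q up pq unfolding msucc_def by auto
        then have "t \<in> D" using allC by force
        then have "A q \<le> A t" using q tM p by force
        then have "t = q" using tM injM q by force
        then show ?thesis using up by simp
      qed
    qed
  next
    case (Some p')
    then have s: "(p,p') \<in> K" "p' \<in> C" "A p < A p'" "\<forall>c\<in>C. A p < A c \<longrightarrow> A p' \<le> A c"
      using sf p(1) unfolding succ_fun_def by force+
    define th' where "th' = min (A p') (A q)"
    have thp: "A p < th'" using s pq unfolding th'_def by auto
    have "pre A C (nP p) th'" using Some s thp unfolding pre_def th'_def by auto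
    moreover have "pre A D (Some q) th'" using q thp p unfolding pre_def th'_def by force
    ultimately have W: "wconcl A K C D X th'" using IH by blast
    show ?thesis unfolding wconcl_def
    proof (rule conjI; intro allI impI ballI)
      fix x y assume "(x,y) \<in> insert (p,q) X"
      then show "((x\<in>C \<and> y\<in>D) \<or> (x\<in>D \<and> y\<in>C)) \<and> A x < A y"
        using W p q pq unfolding wconcl_def by auto
    next
      fix u t assume u: "u \<in> ?M" and th: "th \<le> A u" and ms: "msucc A ?M u t"
      show "(u,t) \<in> K \<union> insert (p,q) X"
      proof (cases "th' \<le> A u")
        case True then show ?thesis using W u ms unfolding wconcl_def by auto
      next
        case False
        have "u \<notin> D" using False th q unfolding th'_def by force
        then have uC: "u \<in> C" using u by simp
        have "u = p"
        proof (rule ccontr)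
          assume "u \<noteq> p"
          then have "A u \<noteq> A p" using injM uC p(1) by blast
          then have "A p < A u" using p uC th by force
          then have "A p' \<le> A u" using s uC by blast
          then show False using False unfolding th'_def by auto
        qed
        have tM: "t \<in> ?M" "A p < A t" "\<forall>z\<in>?M. A p < A z \<longrightarrow> A t \<le> A z"
          using ms \<open>u = p\<close> unfolding msucc_def by auto
        show ?thesis
        proof (cases "t \<in> C")
          case True
          then have "A p' \<le> A t" using s tM by blast
          moreover have "A t \<le> A p'" using tM s by blast
          ultimately have "t = p'" using injM True s(2) by force
          then show ?thesis using s \<open>u = p\<close> by simp
        next
          case False
          then have "t \<in> D" using tM by simp
          then have "A q \<le> A t" using q tM p by force
          moreover have "A t \<le> A q" using tM q pq by blast
          ultimately have "t = q" using injM \<open>t \<in> D\<close> q(1) by force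
          then show ?thesis using \<open>u = p\<close> by simp
        qed
      qed
    qed
  qed
qed

lemma walk:
  assumes "merge_walk A nP nQ po qo X" "inj_on A (C \<union> D)" "C \<inter> D = {}"
    "succ_fun A K C nP" "succ_fun A K D nQ" "pre A C po th" "pre A D qo th"
  shows "wconcl A K C D X th"
  using assms(1,6,7)
proof (induction arbitrary: th rule: merge_walk.induct)
  case (stopP q)
  then show ?case using walk_stop[OF assms(2,5)] by simp
next
  case (stopQ p)
  have "inj_on A (D \<union> C)" using assms(2) by (simp add: Un_commute)
  then show ?case using walk_stop[OF _ assms(4), of D] stopQ wconcl_sym by metis
next
  case (advP p q X)
  show ?case by (rule walk_step[OF assms(2,3,4) advP.prems advP.hyps(1) advP.IH])
next
  case (advQ p q X)
  have pq: "p \<noteq> q" using advQ.prems assms(3) unfolding pre_def by auto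
  have "p \<in> C" "q \<in> D" using advQ.prems unfolding pre_def by auto
  then have "A p \<noteq> A q" using pq assms(2) by (meson UnI1 UnI2 inj_onD)
  then have qp: "A q < A p" using advQ.hyps(1) by linarith
  have inj': "inj_on A (D \<union> C)" using assms(2) by (simp add: Un_commute)
  have "wconcl A K D C (insert (q,p) X) th"
    apply (rule walk_step[OF inj' _ assms(5) advQ.prems(2) advQ.prems(1) qp])
    using assms(3) apply blast
    using advQ.IH wconcl_sym by metis
  then show ?case using wconcl_sym by metis
qed

definition nb :: "arcs \<Rightarrow> nat \<Rightarrow> nat set" where
  "nb E u = {w. (u,w) \<in> E \<or> (w,u) \<in> E}"

lemma mod_m1: "x \<in> {1..n} \<Longrightarrow> y \<in> {1..(n::nat)} \<Longrightarrow> x mod n = y mod n \<Longrightarrow> x = y"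
  apply (cases "x = n"; cases "y = n")
  apply (auto simp: mod_if)
  done

lemma mod_m2: "(x+1) mod n = (y+1) mod (n::nat) \<Longrightarrow> x mod n = y mod n"
  by (simp add: nat_mod_eq_iff)

lemma card_sub1:
  assumes "\<And>x y. x \<in> S \<Longrightarrow> y \<in> S \<Longrightarrow> x = y" "finite S"
  shows "card S \<le> 1"
proof -
  have "card S \<le> Suc 0" using card_le_Suc0_iff_eq[OF assms(2)] assms(1) by blast
  then show ?thesis by simp
qed

lemma nb_G:
  shows "finite (nb (reach_one_graph A n) u) \<and> card (nb (reach_one_graph A n) u) \<le> 2"
proof -
  let ?S1 = "{x\<in>{1..n}. x mod n = (u+1) mod n}"
  let ?S2 = "{x\<in>{1..n}. (x+1) mod n = u mod n}"
  have sub: "nb (reach_one_graph A n) u \<subseteq> ?S1 \<union> ?S2"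
  proof
    fix w assume "w \<in> nb (reach_one_graph A n) u"
    then have "w \<in> {1..n} \<and> (w mod n = (u+1) mod n \<or> (w+1) mod n = u mod n \<or> u mod n = (w+1) mod n \<or> (u+1) mod n = w mod n)"
      unfolding nb_def reach_one_graph_def by blast
    then show "w \<in> ?S1 \<union> ?S2"
      unfolding Un_iff mem_Collect_eq by metis
  qed
  have f1: "finite ?S1" "finite ?S2" by auto
  have "card ?S1 \<le> 1"
  proof (rule card_sub1)
    fix x y assume "x \<in> ?S1" "y \<in> ?S1"
    then have "x \<in> {1..n}" "y \<in> {1..n}" "x mod n = y mod n" by auto
    then show "x = y" by (rule mod_m1)
  qed (rule f1)
  moreover have "card ?S2 \<le> 1"
  proof (rule card_sub1)
    fix x y assume "x \<in> ?S2" "y \<in> ?S2"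
    then have "x \<in> {1..n}" "y \<in> {1..n}" "(x+1) mod n = (y+1) mod n" by auto
    then show "x = y" using mod_m1 mod_m2 by blast
  qed (rule f1)
  ultimately have "card (?S1 \<union> ?S2) \<le> 2" using card_Un_le[of ?S1 ?S2] by linarith
  moreover have "finite (?S1 \<union> ?S2)" using f1 by simp
  ultimately show ?thesis using sub by (meson card_mono finite_subset le_trans)
qed

lemma rt_comparable:
  assumes fn1: "\<And>x y z. (a,x) \<in> R\<^sup>* \<Longrightarrow> (x,y) \<in> R \<Longrightarrow> (x,z) \<in> R \<Longrightarrow> y = z"
    and "(a,y) \<in> R\<^sup>*" "(a,z) \<in> R\<^sup>*"
  shows "(y,z) \<in> R\<^sup>* \<or> (z,y) \<in> R\<^sup>*"
  using assms(2)
proof (induction rule: rtrancl_induct)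
  case base then show ?case using assms(3) by simp
next
  case (step y y')
  from step.IH show ?case
  proof
    assume "(y,z) \<in> R\<^sup>*"
    then show ?thesis
    proof (cases rule: converse_rtranclE)
      case base then show ?thesis using step.hyps(2) by auto
    next
      case (step w)
      then have "w = y'" using fn1 \<open>(a,y) \<in> R\<^sup>*\<close> \<open>(y,y') \<in> R\<close> by blast
      then show ?thesis using step by simp
    qed
  next
    assume "(z,y) \<in> R\<^sup>*"
    then show ?thesis using step.hyps(2) by (blast intro: rtrancl_into_rtrancl)
  qed
qed

definition desc :: "arcs \<Rightarrow> nat \<Rightarrow> nat set" where
  "desc F r = {x. (r,x) \<in> F\<^sup>*}"

locale forest_ctx =
  fixes A :: "nat \<Rightarrow> real" and V :: "nat set" and G F :: arcs
  assumes finV: "finite V" and injA: "inj_on A V"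
    and G_V: "\<And>u w. (u,w) \<in> G \<Longrightarrow> u \<in> V \<and> w \<in> V \<and> A u < A w"
    and nbG: "\<And>u. finite (nb G u) \<and> card (nb G u) \<le> 2"
    and FG: "F \<subseteq> G"
    and indeg: "\<And>x x' y. (x,y)\<in>F \<Longrightarrow> (x',y)\<in>F \<Longrightarrow> x = x'"
begin

lemma F_inc: "(u,w) \<in> F \<Longrightarrow> u \<in> V \<and> w \<in> V \<and> A u < A w"
  using FG G_V by blast

lemma F_rt_le: "(u,w) \<in> F\<^sup>* \<Longrightarrow> A u \<le> A w"
  by (induction rule: rtrancl_induct) (auto dest: F_inc)

lemma F_tr_less: "(u,w) \<in> F\<^sup>+ \<Longrightarrow> A u < A w"
  by (induction rule: trancl_induct) (auto dest: F_inc)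

lemma F_sub: "F \<subseteq> V \<times> V" using F_inc by auto

lemma child_unique:
  assumes "(v,u) \<in> F" "(u,x) \<in> F" "(u,y) \<in> F"
  shows "x = y"
proof (rule ccontr)
  assume xy: "x \<noteq> y"
  have "A v < A u" "A u < A x" "A u < A y" using assms F_inc by auto
  then have "v \<noteq> x" "v \<noteq> y" by auto
  have "{v,x,y} \<subseteq> nb G u" using assms FG unfolding nb_def by auto
  then have "card {v,x,y} \<le> 2" using nbG card_mono by (meson le_trans)
  moreover have "card {v,x,y} = 3" using xy \<open>v \<noteq> x\<close> \<open>v \<noteq> y\<close> by simp
  ultimately show False by simp
qed

lemma children_fin: "finite (children F u) \<and> card (children F u) \<le> 2"
proof -
  have "children F u \<subseteq> nb G u" using FG unfolding nb_def children_def by auto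
  then show ?thesis using nbG by (meson card_mono finite_subset le_trans)
qed

lemma anc_comparable:
  assumes "(x,a) \<in> F\<^sup>*" "(y,a) \<in> F\<^sup>*"
  shows "(x,y) \<in> F\<^sup>* \<or> (y,x) \<in> F\<^sup>*"
proof -
  have "(a,x) \<in> (F\<inverse>)\<^sup>*" "(a,y) \<in> (F\<inverse>)\<^sup>*" using assms by (auto simp: rtrancl_converse)
  then have "(x,y) \<in> (F\<inverse>)\<^sup>* \<or> (y,x) \<in> (F\<inverse>)\<^sup>*"
    by (rule rt_comparable[rotated]) (use indeg in auto)
  then show ?thesis by (auto simp: rtrancl_converse)
qed

lemma root_exists:
  assumes "u \<in> V"
  shows "\<exists>r \<in> forest_roots V F. (r,u) \<in> F\<^sup>*"
proof -
  let ?S = "{x \<in> V. (x,u) \<in> F\<^sup>*}"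
  have fin: "finite ?S" using finV by simp
  have ne: "?S \<noteq> {}" using assms by auto
  define r where "r = arg_min_on A ?S"
  have r: "r \<in> ?S" "\<not>(\<exists>x\<in>?S. A x < A r)" using arg_min_if_finite[OF fin ne] r_def by auto
  have "\<not>(\<exists>z. (z,r) \<in> F)"
  proof
    assume "\<exists>z. (z,r) \<in> F"
    then obtain z where z: "(z,r) \<in> F" by blast
    then have "z \<in> ?S" "A z < A r" using r(1) F_inc by (auto intro: converse_rtrancl_into_rtrancl)
    then show False using r(2) by blast
  qed
  then show ?thesis using r(1) unfolding forest_roots_def by auto
qed

lemma desc_back:
  assumes "r \<in> forest_roots V F" "x \<in> desc F r" "(y,x) \<in> F"
  shows "y \<in> desc F r"
proof -
  have "(r,x) \<in> F\<^sup>*" using assms(2) unfolding desc_def by simp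
  then show ?thesis
  proof (cases rule: rtranclE)
    case base then show ?thesis using assms(1,3) unfolding forest_roots_def by auto
  next
    case (step z)
    then have "z = y" using indeg assms(3) by blast
    then show ?thesis using step unfolding desc_def by simp
  qed
qed

lemma desc_fwd: "x \<in> desc F r \<Longrightarrow> (x,y) \<in> F \<Longrightarrow> y \<in> desc F r"
  unfolding desc_def by (auto intro: rtrancl_into_rtrancl)

lemma roots_eq:
  assumes "r \<in> forest_roots V F" "r' \<in> forest_roots V F" "x \<in> desc F r" "x \<in> desc F r'"
  shows "r = r'"
proof -
  have "(r,r') \<in> F\<^sup>* \<or> (r',r) \<in> F\<^sup>*" using anc_comparable assms(3,4) unfolding desc_def by auto
  then show ?thesis
  proof
    assume "(r,r') \<in> F\<^sup>*"
    then show ?thesis using assms(2) unfolding forest_roots_def by (auto elim: rtranclE)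
  next
    assume "(r',r) \<in> F\<^sup>*"
    then show ?thesis using assms(1) unfolding forest_roots_def by (auto elim: rtranclE)
  qed
qed

lemma chain_comparable:
  assumes "(r,a) \<in> F" "x \<in> desc F a" "y \<in> desc F a"
  shows "(x,y) \<in> F\<^sup>* \<or> (y,x) \<in> F\<^sup>*"
proof -
  have fn1: "y' = z" if "(a,x') \<in> F\<^sup>*" "(x',y') \<in> F" "(x',z) \<in> F" for x' y' z
  proof -
    have "\<exists>v. (v,x') \<in> F" using that(1) assms(1)
      by (cases rule: rtranclE) auto
    then show ?thesis using child_unique that(2,3) by blast
  qed
  have "(a,x) \<in> F\<^sup>*" "(a,y) \<in> F\<^sup>*" using assms(2,3) unfolding desc_def by auto
  then show ?thesis using rt_comparable[where a=a and R=F and y=x and z=y] fn1 by blast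
qed

lemma chain_succ_fun:
  assumes "(r,a) \<in> F"
  shows "succ_fun A F (desc F a) (\<lambda>p. min_valued A (children F p))"
  unfolding succ_fun_def
proof
  fix p assume p: "p \<in> desc F a"
  have "(a,p) \<in> F\<^sup>*" using p unfolding desc_def by simp
  then have hasp: "\<exists>v. (v,p) \<in> F" by (cases rule: rtranclE) (use assms in auto)
  show "case min_valued A (children F p) of None \<Rightarrow> \<forall>c\<in>desc F a. A c \<le> A p
        | Some p' \<Rightarrow> (p, p') \<in> F \<and> p' \<in> desc F a \<and> A p < A p' \<and> (\<forall>c\<in>desc F a. A p < A c \<longrightarrow> A p' \<le> A c)"
  proof (cases "children F p = {}")
    case True
    then have "min_valued A (children F p) = None" unfolding min_valued_def by simp
    moreover have "A c \<le> A p" if c: "c \<in> desc F a" for c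
    proof -
      from chain_comparable[OF assms c p] show ?thesis
      proof
        assume "(c,p) \<in> F\<^sup>*" then show ?thesis using F_rt_le by blast
      next
        assume "(p,c) \<in> F\<^sup>*" then show ?thesis
          using True unfolding children_def by (cases rule: converse_rtranclE) auto
      qed
    qed
    ultimately show ?thesis by simp
  next
    case False
    then obtain p' where p': "(p,p') \<in> F" unfolding children_def by auto
    then have ch: "children F p = {p'}" using child_unique hasp unfolding children_def by blast
    then have "min_valued A (children F p) = Some p'" unfolding min_valued_def
      using arg_min_if_finite(1)[of "{p'}" A] by auto
    moreover have "p' \<in> desc F a" using p p' desc_fwd by blast
    moreover have "A p < A p'" using p' F_inc by blast
    moreover have "A p' \<le> A c" if c: "c \<in> desc F a" "A p < A c" for c
    proof -
      from chain_comparable[OF assms c(1) p] show ?thesis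
      proof
        assume "(c,p) \<in> F\<^sup>*" then show ?thesis using F_rt_le c(2) by force
      next
        assume "(p,c) \<in> F\<^sup>*" then show ?thesis
        proof (cases rule: converse_rtranclE)
          case base then show ?thesis using c(2) by simp
        next
          case (step w)
          then have "w = p'" using ch unfolding children_def by auto
          then show ?thesis using step F_rt_le by blast
        qed
      qed
    qed
    ultimately show ?thesis using p' by simp
  qed
qed

end

definition good :: "(nat \<Rightarrow> real) \<Rightarrow> nat set \<Rightarrow> arcs \<Rightarrow> bool" where
  "good A V K \<longleftrightarrow> (\<forall>u w. (u,w) \<in> K \<longrightarrow> u \<in> V \<and> w \<in> V \<and> A u < A w)
     \<and> (\<forall>u w. (u,w) \<in> sc K \<longrightarrow> A u < A w \<longrightarrow> (\<exists>s. (u,s) \<in> K \<and> A s \<le> A w))"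

lemma good_sub: "good A V K \<Longrightarrow> K \<subseteq> V \<times> V"
  unfolding good_def by auto

lemma msucc_exists:
  fixes A :: "nat \<Rightarrow> real"
  assumes "finite M" "w \<in> M" "A u < A w"
  shows "\<exists>t. msucc A M u t \<and> A t \<le> A w"
proof -
  let ?U = "{z \<in> M. A u < A z}"
  have fin: "finite ?U" using assms(1) by simp
  have ne: "?U \<noteq> {}" using assms by auto
  define t where "t = arg_min_on A ?U"
  have "t \<in> ?U" using arg_min_if_finite(1)[OF fin ne] t_def by simp
  moreover have "\<forall>z\<in>?U. A t \<le> A z" using arg_min_least[of ?U _ A] fin ne t_def by blast
  ultimately show ?thesis unfolding msucc_def using assms by auto
qed

context forest_ctx
begin

lemma desc_V: "a \<in> V \<Longrightarrow> desc F a \<subseteq> V"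
  unfolding desc_def by (auto elim: rtranclE dest: F_inc)

lemma root_walk:
  assumes r: "r \<in> forest_roots V F" and c2: "card (children F r) = 2" and ab: "children F r = {a,b}"
    and mw: "merge_walk A (\<lambda>p. min_valued A (children F p)) (\<lambda>p. min_valued A (children F p))
                (Some a) (Some b) Xr"
  shows "(r,a) \<in> F \<and> (r,b) \<in> F \<and> desc F a \<subseteq> desc F r \<and> desc F b \<subseteq> desc F r
     \<and> wconcl A F (desc F a) (desc F b) Xr (min (A a) (A b))"
proof -
  have ab': "a \<noteq> b" using c2 ab by auto
  have ra: "(r,a) \<in> F" and rb: "(r,b) \<in> F" using ab unfolding children_def by auto
  have aV: "a \<in> V" "b \<in> V" using ra rb F_inc by auto
  have sub: "desc F a \<subseteq> desc F r" "desc F b \<subseteq> desc F r"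
    using ra rb unfolding desc_def by (auto intro: converse_rtrancl_into_rtrancl)
  have disj: "desc F a \<inter> desc F b = {}"
  proof (rule ccontr)
    assume "desc F a \<inter> desc F b \<noteq> {}"
    then obtain x where "(a,x) \<in> F\<^sup>*" "(b,x) \<in> F\<^sup>*" unfolding desc_def by auto
    then have "(a,b) \<in> F\<^sup>* \<or> (b,a) \<in> F\<^sup>*" using anc_comparable by blast
    then show False
    proof
      assume "(a,b) \<in> F\<^sup>*"
      then show False
      proof (cases rule: rtranclE)
        case base then show False using ab' by simp
      next
        case (step z)
        then have "z = r" using indeg rb by blast
        then show False using step(1) F_rt_le ra F_inc by force
      qed
    next
      assume "(b,a) \<in> F\<^sup>*"
      then show False
      proof (cases rule: rtranclE)
        case base then show False using ab' by simp
      next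
        case (step z)
        then have "z = r" using indeg ra by blast
        then show False using step(1) F_rt_le rb F_inc by force
      qed
    qed
  qed
  have inj: "inj_on A (desc F a \<union> desc F b)"
    using injA desc_V aV by (meson Un_least inj_on_subset)
  have pa: "pre A (desc F a) (Some a) (min (A a) (A b))"
    unfolding pre_def desc_def using F_rt_le by auto
  have pb: "pre A (desc F b) (Some b) (min (A a) (A b))"
    unfolding pre_def desc_def using F_rt_le by auto
  have "wconcl A F (desc F a) (desc F b) Xr (min (A a) (A b))"
    by (rule walk[OF mw inj disj chain_succ_fun[OF ra] chain_succ_fun[OF rb] pa pb])
  then show ?thesis using ra rb sub by blast
qed

lemma H1_good:
  assumes ms: "merge_subtrees A V F H1"
  shows "good A V H1 \<and> (\<forall>r\<in>forest_roots V F. \<forall>r'\<in>forest_roots V F. (r,r') \<in> sc H1 \<longrightarrow> r = r')"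
proof -
  let ?RR = "{r \<in> forest_roots V F. card (children F r) = 2}"
  obtain X where X: "\<forall>r \<in> forest_roots V F. card (children F r) = 2 \<longrightarrow>
           (\<exists>a b. children F r = {a, b} \<and>
              merge_walk A (\<lambda>p. min_valued A (children F p)) (\<lambda>p. min_valued A (children F p))
                (Some a) (Some b) (X r))"
    and H1: "H1 = F \<union> (\<Union>r \<in> ?RR. X r)"
    using ms unfolding merge_subtrees_def by blast
  have RW: "\<exists>a b. children F r = {a,b} \<and> (r,a) \<in> F \<and> (r,b) \<in> F \<and> desc F a \<subseteq> desc F r \<and> desc F b \<subseteq> desc F r
     \<and> wconcl A F (desc F a) (desc F b) (X r) (min (A a) (A b))" if rr: "r \<in> ?RR" for r
  proof -
    obtain a b where "children F r = {a,b}" and mw: "merge_walk A (\<lambda>p. min_valued A (children F p)) (\<lambda>p. min_valued A (children F p))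
                (Some a) (Some b) (X r)" using X rr by blast
    then show ?thesis using root_walk[of r a b "X r"] rr by blast
  qed
  have Xarc: "x \<in> desc F r \<and> y \<in> desc F r \<and> x \<in> V \<and> y \<in> V \<and> A x < A y" if rx: "r \<in> ?RR" "(x,y) \<in> X r" for r x y
  proof -
    obtain a b where h: "desc F a \<subseteq> desc F r" "desc F b \<subseteq> desc F r" "(r,a) \<in> F" "(r,b) \<in> F"
      "wconcl A F (desc F a) (desc F b) (X r) (min (A a) (A b))" using RW[OF rx(1)] by blast
    have "(x \<in> desc F a \<and> y \<in> desc F b \<or> x \<in> desc F b \<and> y \<in> desc F a) \<and> A x < A y"
      using h(5) rx(2) unfolding wconcl_def by blast
    moreover have "desc F a \<subseteq> V" "desc F b \<subseteq> V" using desc_V h(3,4) F_inc by auto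
    ultimately show ?thesis using h(1,2) by blast
  qed
  have arcs: "u \<in> V \<and> w \<in> V \<and> A u < A w" if "(u,w) \<in> H1" for u w
    using that H1 F_inc Xarc by blast
  then have H1V: "H1 \<subseteq> V \<times> V" by auto
  have closed: "y \<in> desc F r0" if rxy: "r0 \<in> forest_roots V F" "x \<in> desc F r0" "(x,y) \<in> H1 \<or> (y,x) \<in> H1" for r0 x y
  proof -
    consider "(x,y) \<in> F" | "(y,x) \<in> F" | r where "r \<in> ?RR" "(x,y) \<in> X r \<or> (y,x) \<in> X r"
      using rxy(3) H1 by blast
    then show ?thesis
    proof cases
      case 1 then show ?thesis using desc_fwd rxy by blast
    next
      case 2 then show ?thesis using desc_back rxy by blast
    next
      case 3
      then have "x \<in> desc F r" "y \<in> desc F r" using Xarc by blast+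
      moreover have "r = r0" using roots_eq[of r r0 x] 3(1) rxy(1,2) \<open>x \<in> desc F r\<close> by blast
      ultimately show ?thesis by simp
    qed
  qed
  have conn_desc: "w \<in> desc F r0" if "r0 \<in> forest_roots V F" "u \<in> desc F r0" "(u,w) \<in> sc H1" for r0 u w
    by (rule sc_closed[of "desc F r0" H1 u w]) (use closed that in blast)+
  have g2: "\<exists>s. (u,s) \<in> H1 \<and> A s \<le> A w" if uw: "(u,w) \<in> sc H1" "A u < A w" for u w
  proof -
    have "u \<noteq> w" using uw by auto
    then have uV: "u \<in> V" using sc_V[OF H1V uw(1)] by blast
    obtain r0 where r0: "r0 \<in> forest_roots V F" "(r0,u) \<in> F\<^sup>*" using root_exists[OF uV] by blast
    have ud: "u \<in> desc F r0" using r0 unfolding desc_def by simp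
    have wd: "w \<in> desc F r0" using conn_desc[OF r0(1) ud uw(1)] .
    show ?thesis
    proof (cases "(u,w) \<in> F\<^sup>*")
      case True
      then show ?thesis
      proof (cases rule: converse_rtranclE)
        case base then show ?thesis using \<open>u \<noteq> w\<close> by simp
      next
        case (step s)
        then show ?thesis using H1 F_rt_le by blast
      qed
    next
      case False
      have nwu: "(w,u) \<notin> F\<^sup>*" using F_rt_le uw(2) by force
      have "u \<noteq> r0" using False wd unfolding desc_def by auto
      then obtain c1 where c1: "(r0,c1) \<in> F" "(c1,u) \<in> F\<^sup>*" using r0(2) by (auto elim: converse_rtranclE)
      have "w \<noteq> r0" using nwu ud unfolding desc_def by auto
      then obtain c2 where c2: "(r0,c2) \<in> F" "(c2,w) \<in> F\<^sup>*" using wd unfolding desc_def by (auto elim: converse_rtranclE)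
      have "c1 \<noteq> c2"
      proof
        assume "c1 = c2"
        then have "(u,w) \<in> F\<^sup>* \<or> (w,u) \<in> F\<^sup>*" using chain_comparable[OF c1(1), of u w] c1 c2 unfolding desc_def by auto
        then show False using False nwu by blast
      qed
      have "{c1,c2} \<subseteq> children F r0" using c1 c2 unfolding children_def by auto
      then have "card {c1,c2} \<le> card (children F r0)" using children_fin by (meson card_mono)
      then have "card (children F r0) = 2" using children_fin \<open>c1 \<noteq> c2\<close> by (metis card_2_iff le_antisym)
      then have rRR: "r0 \<in> ?RR" using r0(1) by simp
      obtain a b where h: "children F r0 = {a,b}" "(r0,a) \<in> F" "(r0,b) \<in> F"
        "wconcl A F (desc F a) (desc F b) (X r0) (min (A a) (A b))" using RW[OF rRR] by blast
      have "c1 \<in> {a,b}" "c2 \<in> {a,b}" using h(1) c1 c2 unfolding children_def by auto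
      then have uM: "u \<in> desc F a \<union> desc F b" and wM: "w \<in> desc F a \<union> desc F b"
        using c1 c2 unfolding desc_def by auto
      have finM: "finite (desc F a \<union> desc F b)" using desc_V h(2,3) F_inc finV by (meson finite_subset Un_least)
      obtain t where t: "msucc A (desc F a \<union> desc F b) u t" "A t \<le> A w" using msucc_exists[OF finM wM uw(2)] by blast
      have "min (A a) (A b) \<le> A u" using uM F_rt_le unfolding desc_def by fastforce
      then have "(u,t) \<in> F \<union> X r0" using h(4) uM t(1) unfolding wconcl_def by blast
      then have "(u,t) \<in> H1" using H1 rRR by blast
      then show ?thesis using t(2) by blast
    qed
  qed
  have "good A V H1" unfolding good_def using arcs g2 by blast
  moreover have "r = r'" if "r \<in> forest_roots V F" "r' \<in> forest_roots V F" "(r,r') \<in> sc H1" for r r'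
  proof -
    have "r \<in> desc F r" unfolding desc_def by simp
    then have "r' \<in> desc F r" using conn_desc that by blast
    moreover have "r' \<in> desc F r'" unfolding desc_def by simp
    ultimately show ?thesis using roots_eq that(1,2) by blast
  qed
  ultimately show ?thesis by blast
qed

end

lemma good_arc: "good A V K \<Longrightarrow> (u,w) \<in> K \<Longrightarrow> u \<in> V \<and> w \<in> V \<and> A u < A w"
  unfolding good_def by blast

lemma good_conn: "good A V K \<Longrightarrow> (u,w) \<in> sc K \<Longrightarrow> A u < A w \<Longrightarrow> \<exists>s. (u,s) \<in> K \<and> A s \<le> A w"
  unfolding good_def by blast

lemma wconcl_arc: "wconcl A K C D X th \<Longrightarrow> (x,y) \<in> X \<Longrightarrow> ((x\<in>C \<and> y\<in>D) \<or> (x\<in>D \<and> y\<in>C)) \<and> A x < A y"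
  unfolding wconcl_def by blast

lemma wconcl_succ: "wconcl A K C D X th \<Longrightarrow> u \<in> C \<union> D \<Longrightarrow> th \<le> A u \<Longrightarrow> msucc A (C \<union> D) u t \<Longrightarrow> (u,t) \<in> K \<union> X"
  unfolding wconcl_def by blast

lemma conn_split:
  assumes "(u,w) \<in> sc (K \<union> X)" "\<And>x y. (x,y) \<in> X \<Longrightarrow> x \<in> M \<and> y \<in> M"
    "\<And>x y. x \<in> M \<Longrightarrow> (x,y) \<in> sc K \<Longrightarrow> y \<in> M"
  shows "(u,w) \<in> sc K \<or> (u \<in> M \<and> w \<in> M)"
  using assms(1)
proof (induction rule: rtrancl_induct)
  case base then show ?case by simp
next
  case (step y z)
  show ?case
  proof (cases "(y,z) \<in> K \<union> K\<inverse>")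
    case True
    then have yz: "(y,z) \<in> sc K" by auto
    from step.IH show ?thesis
    proof
      assume "(u,y) \<in> sc K" then show ?thesis using yz by (meson rtrancl_trans)
    next
      assume "u \<in> M \<and> y \<in> M" then show ?thesis using yz assms(3) by blast
    qed
  next
    case False
    then have "(y,z) \<in> X \<or> (z,y) \<in> X" using step.hyps(2) by auto
    then have yz: "y \<in> M" "z \<in> M" using assms(2) by blast+
    from step.IH show ?thesis
    proof
      assume "(u,y) \<in> sc K"
      then have "(y,u) \<in> sc K" by (rule sc_sym)
      then show ?thesis using yz assms(3) by blast
    next
      assume "u \<in> M \<and> y \<in> M" then show ?thesis using yz by blast
    qed
  qed
qed

lemma ucomp_V:
  assumes "good A V K" "r \<in> V"
  shows "ucomp K r \<subseteq> V"
proof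
  fix x assume "x \<in> ucomp K r"
  then have "(r,x) \<in> sc K" unfolding ucomp_def by simp
  then show "x \<in> V" using sc_V[OF good_sub[OF assms(1)]] assms(2) by blast
qed

lemma next_in_succ:
  fixes A :: "nat \<Rightarrow> real"
  assumes g: "good A V K" and C: "C = ucomp K r" and CV: "C \<subseteq> V" and fin: "finite V"
  shows "succ_fun A K C (next_in A K C)"
  unfolding succ_fun_def
proof
  fix p assume pC: "p \<in> C"
  let ?N = "{w \<in> C. (p,w) \<in> K}"
  have "?N \<subseteq> V" using CV by blast
  then have finN: "finite ?N" using fin by (rule finite_subset)
  have rp: "(r,p) \<in> sc K" using pC unfolding C ucomp_def by simp
  have conn: "(p,c) \<in> sc K" if cC: "c \<in> C" for c
  proof -
    have "(r,c) \<in> sc K" using cC unfolding C ucomp_def by simp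
    then show ?thesis using sc_trans[OF sc_sym[OF rp]] by blast
  qed
  have getS: "\<exists>s \<in> ?N. A s \<le> A c" if cc: "c \<in> C" "A p < A c" for c
  proof -
    obtain s where s: "(p,s) \<in> K" "A s \<le> A c" using good_conn[OF g conn[OF cc(1)] cc(2)] by blast
    have "(p,s) \<in> sc K" using s(1) by auto
    then have "(r,s) \<in> sc K" using sc_trans[OF rp] by blast
    then have "s \<in> C" unfolding C ucomp_def by simp
    then show ?thesis using s by blast
  qed
  show "case next_in A K C p of None \<Rightarrow> \<forall>c\<in>C. A c \<le> A p
        | Some p' \<Rightarrow> (p, p') \<in> K \<and> p' \<in> C \<and> A p < A p' \<and> (\<forall>c\<in>C. A p < A c \<longrightarrow> A p' \<le> A c)"
  proof (cases "?N = {}")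
    case True
    then have "next_in A K C p = None" unfolding next_in_def min_valued_def by simp
    moreover have "\<forall>c\<in>C. A c \<le> A p"
    proof
      fix c assume "c \<in> C"
      show "A c \<le> A p"
      proof (rule ccontr)
        assume "\<not> A c \<le> A p"
        then have "A p < A c" by simp
        then show False using getS[OF \<open>c \<in> C\<close>] True by blast
      qed
    qed
    ultimately show ?thesis by simp
  next
    case False
    define p' where "p' = arg_min_on A ?N"
    have nx: "next_in A K C p = Some p'" unfolding next_in_def min_valued_def p'_def using False by simp
    have p'N: "p' \<in> ?N" using arg_min_if_finite(1)[OF finN False] p'_def by simp
    have le: "A p' \<le> A s" if sN: "s \<in> ?N" for s using arg_min_least[OF finN False sN] p'_def by simp
    have "A p < A p'" using p'N good_arc[OF g] by blast
    moreover have "\<forall>c\<in>C. A p < A c \<longrightarrow> A p' \<le> A c"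
    proof (intro ballI impI)
      fix c assume "c \<in> C" "A p < A c"
      then obtain s where "s \<in> ?N" "A s \<le> A c" using getS by blast
      then show "A p' \<le> A c" using le by fastforce
    qed
    ultimately show ?thesis using nx p'N by simp
  qed
qed

lemma comp_min:
  fixes A :: "nat \<Rightarrow> real"
  assumes "finite C" "r \<in> C"
  shows "\<exists>p. min_valued A C = Some p \<and> p \<in> C \<and> (\<forall>c\<in>C. A p \<le> A c)"
proof -
  have ne: "C \<noteq> {}" using assms by auto
  show ?thesis unfolding min_valued_def using ne arg_min_if_finite(1)[OF assms(1) ne] arg_min_least[OF assms(1) ne]
    by auto
qed

lemma ms_good:
  fixes A :: "nat \<Rightarrow> real"
  assumes "merge_step A K rs K' R" "good A V K" "inj_on A V" "finite V" "set rs \<subseteq> V" "distinct rs"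
    "\<forall>x\<in>set rs. \<forall>y\<in>set rs. (x,y) \<in> sc K \<longrightarrow> x = y"
  shows "good A V K'"
  using assms
proof (induction arbitrary: rule: merge_step.induct)
  case (ms_nil K) then show ?case by simp
next
  case (ms_single K r) then show ?case by simp
next
  case (ms_pair K r1 r2 X rs K' R)
  let ?C = "ucomp K r1" and ?D = "ucomp K r2"
  let ?M = "?C \<union> ?D"
  have r12: "r1 \<in> V" "r2 \<in> V" "r1 \<noteq> r2" using ms_pair.prems(4,5) by auto
  have CV: "?C \<subseteq> V" "?D \<subseteq> V" using ucomp_V[OF ms_pair.prems(1)] r12 by auto
  have finC: "finite ?C" "finite ?D" using finite_subset[OF CV(1) ms_pair.prems(3)] finite_subset[OF CV(2) ms_pair.prems(3)] by auto
  have rin: "r1 \<in> ?C" "r2 \<in> ?D" unfolding ucomp_def by auto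
  have disj: "?C \<inter> ?D = {}"
  proof (rule ccontr)
    assume "?C \<inter> ?D \<noteq> {}"
    then obtain x where "(r1,x) \<in> sc K" "(r2,x) \<in> sc K" unfolding ucomp_def by auto
    then have "(r1,r2) \<in> sc K" by (meson sc_sym sc_trans)
    then show False using ms_pair.prems(6) r12 by simp
  qed
  have inj: "inj_on A ?M" using CV ms_pair.prems(2) by (meson Un_least inj_on_subset)
  obtain p0 where p0: "min_valued A ?C = Some p0" "p0 \<in> ?C" "\<forall>c\<in>?C. A p0 \<le> A c" using comp_min[OF finC(1) rin(1)] by blast
  obtain q0 where q0: "min_valued A ?D = Some q0" "q0 \<in> ?D" "\<forall>c\<in>?D. A q0 \<le> A c" using comp_min[OF finC(2) rin(2)] by blast
  define th where "th = min (A p0) (A q0)"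
  have pa: "pre A ?C (min_valued A ?C) th" using p0 unfolding pre_def th_def by auto
  have pb: "pre A ?D (min_valued A ?D) th" using q0 unfolding pre_def th_def by auto
  have W: "wconcl A K ?C ?D X th"
    by (rule walk[OF ms_pair.hyps(1) inj disj next_in_succ[OF ms_pair.prems(1) refl CV(1) ms_pair.prems(3)]
          next_in_succ[OF ms_pair.prems(1) refl CV(2) ms_pair.prems(3)] pa pb])
  have Xarc: "x \<in> ?M \<and> y \<in> ?M \<and> A x < A y" if "(x,y) \<in> X" for x y
    using wconcl_arc[OF W that] by blast
  have Mcl: "y \<in> ?M" if "x \<in> ?M" "(x,y) \<in> sc K" for x y
  proof -
    from that(1) have "(r1,x) \<in> sc K \<or> (r2,x) \<in> sc K" unfolding ucomp_def by auto
    then have "(r1,y) \<in> sc K \<or> (r2,y) \<in> sc K" using that(2) sc_trans by blast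
    then show ?thesis unfolding ucomp_def by auto
  qed
  have split: "(u,w) \<in> sc K \<or> (u \<in> ?M \<and> w \<in> ?M)" if "(u,w) \<in> sc (K \<union> X)" for u w
    by (rule conn_split[OF that]) (use Xarc Mcl in blast)+
  have g1: "u \<in> V \<and> w \<in> V \<and> A u < A w" if "(u,w) \<in> K \<union> X" for u w
  proof (cases "(u,w) \<in> K")
    case True then show ?thesis using good_arc[OF ms_pair.prems(1)] by blast
  next
    case False then have "(u,w) \<in> X" using that by blast
    then show ?thesis using Xarc CV by blast
  qed
  have g2: "\<exists>s. (u,s) \<in> K \<union> X \<and> A s \<le> A w" if uw0: "(u,w) \<in> sc (K \<union> X)" "A u < A w" for u w
  proof -
    from split[OF uw0(1)] show ?thesis
    proof
      assume "(u,w) \<in> sc K"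
      then show ?thesis using good_conn[OF ms_pair.prems(1)] uw0(2) by blast
    next
      assume uw: "u \<in> ?M \<and> w \<in> ?M"
      have finM: "finite ?M" using finC by simp
      obtain t where t: "msucc A ?M u t" "A t \<le> A w" using msucc_exists[OF finM, of w A u] uw uw0(2) by blast
      have "A p0 \<le> A u \<or> A q0 \<le> A u" using uw p0(3) q0(3) by blast
      then have "th \<le> A u" unfolding th_def by auto
      then have "(u,t) \<in> K \<union> X" using wconcl_succ[OF W] uw t by blast
      then show ?thesis using t by blast
    qed
  qed
  have gKX: "good A V (K \<union> X)" unfolding good_def using g1 g2 by presburger
  have unc: "\<forall>x\<in>set rs. \<forall>y\<in>set rs. (x,y) \<in> sc (K \<union> X) \<longrightarrow> x = y"
  proof (intro ballI impI)
    fix x y assume xy: "x \<in> set rs" "y \<in> set rs" "(x,y) \<in> sc (K \<union> X)"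
    from split[OF xy(3)] show "x = y"
    proof
      assume "(x,y) \<in> sc K" then show ?thesis using ms_pair.prems(6) xy by simp
    next
      assume "x \<in> ?M \<and> y \<in> ?M"
      then have "(r1,x) \<in> sc K \<or> (r2,x) \<in> sc K" unfolding ucomp_def by auto
      then have "r1 = x \<or> r2 = x" using ms_pair.prems(6) xy(1) by auto
      then show ?thesis using ms_pair.prems(5) xy(1) by auto
    qed
  qed
  have "set rs \<subseteq> V" "distinct rs" using ms_pair.prems(4,5) by auto
  then show ?case using ms_pair.IH[OF gKX ms_pair.prems(2,3)] unc by blast
qed

lemma zip_sorted:
  fixes A :: "nat \<Rightarrow> real"
  assumes "sorted_wrt (\<lambda>x y. A x < A y) vs"
  shows "(x,y) \<in> set (zip vs (tl vs)) \<longleftrightarrow> x \<in> set vs \<and> y \<in> set vs \<and> A x < A y \<and> \<not>(\<exists>z\<in>set vs. A x < A z \<and> A z < A y)"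
  using assms
proof (induction vs rule: induct_list012)
  case 1 then show ?case by simp
next
  case (2 a) then show ?case by auto
next
  case (3 a b l)
  have s: "A a < A b" "\<forall>z\<in>set l. A a < A z" "\<forall>z\<in>set l. A b < A z" "sorted_wrt (\<lambda>x y. A x < A y) (b#l)"
    using "3.prems" by auto
  have IH: "(x,y) \<in> set (zip (b#l) l) \<longleftrightarrow> x \<in> set (b#l) \<and> y \<in> set (b#l) \<and> A x < A y \<and> \<not>(\<exists>z\<in>set (b#l). A x < A z \<and> A z < A y)"
    using "3.IH"(2)[OF s(4)] by simp
  have eq: "zip (a#b#l) (tl (a#b#l)) = (a,b) # zip (b#l) l" by simp
  show ?case
  proof
    assume "(x,y) \<in> set (zip (a#b#l) (tl (a#b#l)))"
    then have "(x,y) = (a,b) \<or> (x,y) \<in> set (zip (b#l) l)" using eq by simp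
    then show "x \<in> set (a#b#l) \<and> y \<in> set (a#b#l) \<and> A x < A y \<and> \<not>(\<exists>z\<in>set (a#b#l). A x < A z \<and> A z < A y)"
    proof
      assume "(x,y) = (a,b)" then show ?thesis using s by force
    next
      assume "(x,y) \<in> set (zip (b#l) l)"
      then have h: "x \<in> set (b#l) \<and> y \<in> set (b#l) \<and> A x < A y \<and> \<not>(\<exists>z\<in>set (b#l). A x < A z \<and> A z < A y)" using IH by blast
      then have "A a < A x" using s by auto
      then show ?thesis using h by auto
    qed
  next
    assume h: "x \<in> set (a#b#l) \<and> y \<in> set (a#b#l) \<and> A x < A y \<and> \<not>(\<exists>z\<in>set (a#b#l). A x < A z \<and> A z < A y)"
    show "(x,y) \<in> set (zip (a#b#l) (tl (a#b#l)))"
    proof (cases "x = a")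
      case True
      have "y = b"
      proof (rule ccontr)
        assume "y \<noteq> b"
        then have "y \<in> set l" using h True by auto
        then show False using h True s by force
      qed
      then show ?thesis using True eq by simp
    next
      case False
      then have xb: "x \<in> set (b#l)" using h by simp
      then have "A a < A x" using s by auto
      then have "y \<noteq> a" using h by auto
      then have "y \<in> set (b#l)" using h by simp
      then have "(x,y) \<in> set (zip (b#l) l)" using IH xb h by auto
      then show ?thesis using eq by simp
    qed
  qed
qed

locale good_ctx =
  fixes A :: "nat \<Rightarrow> real" and V :: "nat set" and H :: arcs
  assumes gd: "good A V H" and injA: "inj_on A V" and finV: "finite V"
begin

definition above :: "nat \<Rightarrow> nat set" where
  "above u = {w. (u,w) \<in> sc H \<and> A u < A w}"

definition Succ :: arcs where
  "Succ = {(u,s). (u,s) \<in> H \<and> (\<forall>w. (u,w) \<in> sc H \<longrightarrow> A u < A w \<longrightarrow> A s \<le> A w)}"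

definition closedS :: "nat \<Rightarrow> nat set \<Rightarrow> bool" where
  "closedS t S \<longleftrightarrow> (\<forall>w\<in>S. ((t,w) \<in> sc H \<longrightarrow> A t \<le> A w) \<longrightarrow> above w \<subseteq> S)"

definition vp :: "nat \<Rightarrow> nat set \<times> arcs \<Rightarrow> nat set \<times> arcs \<Rightarrow> bool" where
  "vp u st st' \<longleftrightarrow> u \<in> fst st' \<and> fst st \<subseteq> fst st' \<and> fst st' \<subseteq> fst st \<union> insert u (above u)
      \<and> closedS u (fst st') \<and> snd st \<subseteq> snd st' \<and> snd st' - snd st \<subseteq> Succ"

definition lp :: "nat \<Rightarrow> nat list \<Rightarrow> nat set \<times> arcs \<Rightarrow> nat set \<times> arcs \<Rightarrow> bool" where
  "lp u ws st st' \<longleftrightarrow> (set ws \<subseteq> fst st \<longrightarrow> st' = st) \<and>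
     (\<forall>x rest. ws = x # rest \<longrightarrow> (u,x) \<in> Succ \<longrightarrow> x \<notin> fst st \<longrightarrow> set rest \<subseteq> above x
        \<longrightarrow> closedS x (fst st) \<longrightarrow> vp x st st')"

lemma HV: "H \<subseteq> V \<times> V" using good_sub[OF gd] .

lemma injc: "(u,w) \<in> sc H \<Longrightarrow> A u = A w \<Longrightarrow> u = w"
proof (rule ccontr)
  assume h: "(u,w) \<in> sc H" "A u = A w" "u \<noteq> w"
  then have "u \<in> V" "w \<in> V" using sc_V[OF HV] by blast+
  then show False using h injA by (meson inj_onD)
qed

lemma above_self: "u \<notin> above u" unfolding above_def by simp

lemma Succ_facts:
  assumes "(u,x) \<in> Succ"
  shows "x \<in> above u" "above x \<subseteq> above u" "above u \<subseteq> insert x (above x)" "(u,x) \<in> H"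
proof -
  have ux: "(u,x) \<in> H" "\<forall>w. (u,w) \<in> sc H \<longrightarrow> A u < A w \<longrightarrow> A x \<le> A w"
    using assms unfolding Succ_def by auto
  show "(u,x) \<in> H" using ux(1) .
  have scx: "(u,x) \<in> sc H" using ux(1) by auto
  have lt: "A u < A x" using good_arc[OF gd ux(1)] by simp
  show "x \<in> above u" using scx lt unfolding above_def by simp
  show "above x \<subseteq> above u"
  proof
    fix y assume "y \<in> above x"
    then have "(x,y) \<in> sc H" "A x < A y" unfolding above_def by auto
    then show "y \<in> above u" using sc_trans[OF scx] lt unfolding above_def by auto
  qed
  show "above u \<subseteq> insert x (above x)"
  proof
    fix y assume "y \<in> above u"
    then have y: "(u,y) \<in> sc H" "A u < A y" unfolding above_def by auto
    then have le: "A x \<le> A y" using ux(2) by blast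
    have xy: "(x,y) \<in> sc H" using sc_trans[OF sc_sym[OF scx] y(1)] .
    show "y \<in> insert x (above x)"
    proof (cases "y = x")
      case False
      then have "A x \<noteq> A y" using injc[OF xy] by auto
      then show ?thesis using le xy unfolding above_def by auto
    qed simp
  qed
qed

lemma ol_cases:
  "(out_list A H u = [] \<and> above u = {}) \<or>
   (\<exists>x rest. out_list A H u = x # rest \<and> (u,x) \<in> Succ \<and> set rest \<subseteq> above x)"
proof -
  let ?ol = "out_list A H u"
  have setol: "set ?ol = {w. (u,w) \<in> H}" using out_list_set[OF injA HV finV] .
  have "{w. (u,w) \<in> H} \<subseteq> V" using HV by auto
  moreover then have "finite {w. (u,w) \<in> H}" using finV by (rule finite_subset)
  ultimately have sorted: "sorted_wrt (\<lambda>x y. A x < A y) ?ol"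
    unfolding out_list_def using skl_props(2)[OF injA] by blast
  show ?thesis
  proof (cases ?ol)
    case Nil
    then have noout: "\<And>w. (u,w) \<notin> H" using setol by auto
    have "above u = {}"
    proof (rule ccontr)
      assume "above u \<noteq> {}"
      then obtain w where "(u,w) \<in> sc H" "A u < A w" unfolding above_def by auto
      then obtain s where "(u,s) \<in> H" using good_conn[OF gd] by blast
      then show False using noout by blast
    qed
    then show ?thesis using Nil by simp
  next
    case (Cons x rest)
    have ux: "(u,x) \<in> H" using setol Cons by auto
    have srt: "\<forall>y\<in>set rest. A x < A y" using sorted Cons by simp
    have "(u,x) \<in> Succ" unfolding Succ_def
    proof (clarify, intro conjI allI impI)
      show "(u,x) \<in> H" using ux .
    next
      fix w assume "(u,w) \<in> sc H" "A u < A w"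
      then obtain s where s: "(u,s) \<in> H" "A s \<le> A w" using good_conn[OF gd] by blast
      then have "s \<in> set ?ol" using setol by auto
      then have "s = x \<or> s \<in> set rest" using Cons by simp
      then have "A x \<le> A s" using srt by force
      then show "A x \<le> A w" using s(2) by simp
    qed
    moreover have "set rest \<subseteq> above x"
    proof
      fix y assume y: "y \<in> set rest"
      then have "(u,y) \<in> H" using setol Cons by auto
      then have "(x,y) \<in> sc H" using sc_trans[OF sc_sym[OF sc_arc(1)[OF ux]] sc_arc(1)] by blast
      then show "y \<in> above x" using srt y unfolding above_def by auto
    qed
    ultimately show ?thesis using Cons by blast
  qed
qed

lemma closedS_self: "closedS x S \<Longrightarrow> x \<in> S \<Longrightarrow> above x \<subseteq> S"
  unfolding closedS_def by auto

lemma dfs_good: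
  shows "dfs_visit A H u st st' \<Longrightarrow> u \<notin> fst st \<Longrightarrow> closedS u (fst st) \<Longrightarrow> vp u st st'"
    and "dfs_loop A H u ws st st' \<Longrightarrow> lp u ws st st'"
proof (induction rule: dfs_visit_dfs_loop.inducts)
  case (visit u S P st')
  have uS: "u \<notin> S" and cl: "closedS u S" using visit.prems by auto
  have IH: "lp u (out_list A H u) (insert u S, P) st'" using visit.IH by simp
  have clS: "above w \<subseteq> S" if "w \<in> S" "(u,w) \<in> sc H \<longrightarrow> A u \<le> A w" for w
    using cl that unfolding closedS_def by blast
  from ol_cases[of u] show ?case
  proof
    assume h: "out_list A H u = [] \<and> above u = {}"
    then have st': "st' = (insert u S, P)" using IH unfolding lp_def by simp
    have "closedS u (insert u S)" unfolding closedS_def using h clS by blast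
    then show ?thesis using st' unfolding vp_def by auto
  next
    assume "\<exists>x rest. out_list A H u = x # rest \<and> (u,x) \<in> Succ \<and> set rest \<subseteq> above x"
    then obtain x rest where ol: "out_list A H u = x # rest" and sx: "(u,x) \<in> Succ" and rs: "set rest \<subseteq> above x"
      by blast
    note SF = Succ_facts[OF sx]
    have xu: "x \<noteq> u" using SF(1) above_self by metis
    have scux: "(u,x) \<in> sc H" using SF(4) by auto
    show ?thesis
    proof (cases "x \<in> S")
      case True
      have "A u \<le> A x" using SF(1) unfolding above_def by auto
      then have axS: "above x \<subseteq> S" using clS[OF True] by blast
      have "set (out_list A H u) \<subseteq> insert u S" using ol rs axS True by auto
      then have st': "st' = (insert u S, P)" using IH unfolding lp_def by simp
      have "above u \<subseteq> S" using SF(3) axS True by blast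
      then have "closedS u (insert u S)" unfolding closedS_def using clS by blast
      then show ?thesis using st' unfolding vp_def by auto
    next
      case False
      then have xS: "x \<notin> insert u S" using xu by simp
      have "closedS x (insert u S)" unfolding closedS_def
      proof (intro ballI impI)
        fix w assume w: "w \<in> insert u S" and c: "(x,w) \<in> sc H \<longrightarrow> A x \<le> A w"
        show "above w \<subseteq> insert u S"
        proof (cases "w = u")
          case True
          then have "A x \<le> A u" using c sc_sym[OF scux] by blast
          then show ?thesis using SF(1) True unfolding above_def by auto
        next
          case False
          then have wS: "w \<in> S" using w by simp
          have "(u,w) \<in> sc H \<longrightarrow> A u \<le> A w"
          proof
            assume "(u,w) \<in> sc H"
            then have "(x,w) \<in> sc H" using sc_trans[OF sc_sym[OF scux]] by blast
            then have "A x \<le> A w" using c by blast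
            then show "A u \<le> A w" using SF(1) unfolding above_def by auto
          qed
          then show ?thesis using clS[OF wS] by blast
        qed
      qed
      then have V1: "vp x (insert u S, P) st'" using IH ol sx xS rs unfolding lp_def by simp
      obtain S1 P1 where st'eq: "st' = (S1, P1)" by (cases st') auto
      have v: "x \<in> S1" "insert u S \<subseteq> S1" "S1 \<subseteq> insert u S \<union> insert x (above x)" "closedS x S1"
        "P \<subseteq> P1" "P1 - P \<subseteq> Succ" using V1 st'eq unfolding vp_def by auto
      have axS1: "above x \<subseteq> S1" using closedS_self[OF v(4) v(1)] .
      have sub: "S1 \<subseteq> S \<union> insert u (above u)" using v(3) SF(1,2) by blast
      have "closedS u S1" unfolding closedS_def
      proof (intro ballI impI)
        fix w assume w: "w \<in> S1" and c: "(u,w) \<in> sc H \<longrightarrow> A u \<le> A w"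
        show "above w \<subseteq> S1"
        proof (cases "(x,w) \<in> sc H \<longrightarrow> A x \<le> A w")
          case True then show ?thesis using v(4) w unfolding closedS_def by blast
        next
          case False
          then have xw: "(x,w) \<in> sc H" "A w < A x" by auto
          then have uw: "(u,w) \<in> sc H" using sc_trans[OF scux] by blast
          then have "A u \<le> A w" using c by blast
          show ?thesis
          proof (cases "w = u")
            case True
            then show ?thesis using SF(3) axS1 v(1) by blast
          next
            case False
            then have "A u \<noteq> A w" using injc[OF uw] by auto
            then have "w \<in> above u" using uw \<open>A u \<le> A w\<close> unfolding above_def by auto
            then have "A x \<le> A w" using sx unfolding Succ_def above_def by auto
            then show ?thesis using xw by simp
          qed
        qed
      qed
      then show ?thesis using st'eq v sub unfolding vp_def by auto
    qed
  qed
next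
  case (loop_nil u st)
  then show ?case unfolding lp_def by simp
next
  case (loop_seen w S u ws P st')
  have IH: "lp u ws (S,P) st'" using loop_seen.IH by simp
  show ?case unfolding lp_def
  proof (intro conjI allI impI)
    assume "set (w # ws) \<subseteq> fst (S,P)"
    then show "st' = (S,P)" using IH unfolding lp_def by simp
  next
    fix x rest assume "w # ws = x # rest" "x \<notin> fst (S,P)"
    then show "vp x (S,P) st'" using loop_seen.hyps(1) by simp
  qed
next
  case (loop_new w S u P st1 ws st')
  have IH1: "closedS w S \<Longrightarrow> vp w (S, insert (u,w) P) st1" using loop_new.IH(2) loop_new.hyps(1) by simp
  have IH2: "lp u ws st1 st'" using loop_new.IH(4) by simp
  show ?case unfolding lp_def
  proof (intro conjI allI impI)
    assume "set (w # ws) \<subseteq> fst (S,P)"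
    then show "st' = (S,P)" using loop_new.hyps(1) by simp
  next
    fix x rest assume h: "w # ws = x # rest" "(u,x) \<in> Succ" "x \<notin> fst (S,P)" "set rest \<subseteq> above x"
      "closedS x (fst (S,P))"
    then have hx: "x = w" "rest = ws" by auto
    have V1: "vp w (S, insert (u,w) P) st1" using IH1 h hx by simp
    obtain S1 P1 where st1eq: "st1 = (S1,P1)" by (cases st1) auto
    have v: "w \<in> S1" "S \<subseteq> S1" "S1 \<subseteq> S \<union> insert w (above w)" "closedS w S1"
        "insert (u,w) P \<subseteq> P1" "P1 - insert (u,w) P \<subseteq> Succ" using V1 st1eq unfolding vp_def by auto
    have "above w \<subseteq> S1" using closedS_self[OF v(4) v(1)] .
    then have "set ws \<subseteq> fst st1" using h hx st1eq by auto
    then have "st' = st1" using IH2 unfolding lp_def by simp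
    moreover have "P1 - P \<subseteq> Succ" using v(6) h(2) hx by auto
    ultimately show "vp x (S,P) st'" using v st1eq hx unfolding vp_def by auto
  qed
qed

definition fcl :: "nat set \<Rightarrow> bool" where
  "fcl S \<longleftrightarrow> (\<forall>w\<in>S. above w \<subseteq> S)"

lemma run_good:
  "dfs_run A H ls st st' \<Longrightarrow> fcl (fst st) \<Longrightarrow> snd st \<subseteq> Succ \<Longrightarrow> fcl (fst st') \<and> snd st' \<subseteq> Succ"
proof (induction rule: dfs_run.induct)
  case (run_nil st) then show ?case by simp
next
  case (run_seen l S ls P st') then show ?case by simp
next
  case (run_new l S P st1 ls st')
  have "closedS l S" using run_new.prems(1) unfolding fcl_def closedS_def by simp
  then have V1: "vp l (S,P) st1" using dfs_good(1)[OF run_new.hyps(2)] run_new.hyps(1) by simp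
  obtain S1 P1 where st1eq: "st1 = (S1,P1)" by (cases st1) auto
  have v: "l \<in> S1" "S \<subseteq> S1" "S1 \<subseteq> S \<union> insert l (above l)" "closedS l S1"
      "P \<subseteq> P1" "P1 - P \<subseteq> Succ" using V1 st1eq unfolding vp_def by auto
  have "fcl S1" unfolding fcl_def
  proof
    fix w assume w: "w \<in> S1"
    show "above w \<subseteq> S1"
    proof (cases "(l,w) \<in> sc H \<longrightarrow> A l \<le> A w")
      case True then show ?thesis using v(4) w unfolding closedS_def by blast
    next
      case False
      then have "w \<notin> insert l (above l)" unfolding above_def by auto
      then have "w \<in> S" using v(3) w by blast
      then show ?thesis using run_new.prems(1) v(2) unfolding fcl_def by auto
    qed
  qed
  moreover have "P1 \<subseteq> Succ" using v(5,6) run_new.prems(2) by auto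
  ultimately show ?case using run_new.IH st1eq by simp
qed

lemma forest_Succ:
  assumes "dfs_forest A H L F'"
  shows "F' \<subseteq> Succ"
proof -
  obtain S where "dfs_run A H L ({},{}) (S,F')" using assms unfolding dfs_forest_def by blast
  then show ?thesis using run_good[of L "({},{})" "(S,F')"] unfolding fcl_def by simp
qed

end

context good_ctx
begin

lemma dipath:
  assumes FS: "F' \<subseteq> Succ" and vV: "v \<in> V"
  shows "is_dipath F' (ucomp F' v)"
proof -
  let ?C = "ucomp F' v"
  have F'H: "F' \<subseteq> H" using FS unfolding Succ_def by auto
  have F'V: "F' \<subseteq> V \<times> V" using F'H HV by auto
  have Cc: "(v,w) \<in> sc F'" if "w \<in> ?C" for w using that unfolding ucomp_def by simp
  have CH: "(x,y) \<in> sc H" if "x \<in> ?C" "y \<in> ?C" for x y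
  proof -
    have "(v,x) \<in> sc H" "(v,y) \<in> sc H" using sc_mono[OF F'H] Cc that by blast+
    then show ?thesis using sc_trans[OF sc_sym] by blast
  qed
  have CV: "?C \<subseteq> V"
  proof
    fix w assume "w \<in> ?C"
    then have "(v,w) \<in> sc F'" by (rule Cc)
    then show "w \<in> V" using sc_V[OF F'V] vV by (cases "v = w") auto
  qed
  have finC: "finite ?C" using finV CV by (meson finite_subset)
  define vs where "vs = sorted_key_list_of_set A ?C"
  have vs: "set vs = ?C" "sorted_wrt (\<lambda>x y. A x < A y) vs" "distinct vs"
    using skl_props[OF injA CV finC] vs_def by auto
  have inC: "x \<in> ?C \<and> y \<in> ?C" if "(x,y) \<in> F'" "x \<in> ?C \<or> y \<in> ?C" for x y
  proof -
    have xy: "(x,y) \<in> F' \<union> F'\<inverse>" "(y,x) \<in> F' \<union> F'\<inverse>" using that(1) by auto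
    from that(2) show ?thesis
    proof
      assume "x \<in> ?C"
      then have "(v,y) \<in> sc F'" using Cc xy(1) by (meson rtrancl.rtrancl_into_rtrancl)
      then show ?thesis using \<open>x \<in> ?C\<close> unfolding ucomp_def by simp
    next
      assume "y \<in> ?C"
      then have "(v,x) \<in> sc F'" using Cc xy(2) by (meson rtrancl.rtrancl_into_rtrancl)
      then show ?thesis using \<open>y \<in> ?C\<close> unfolding ucomp_def by simp
    qed
  qed
  have arcA: "A x < A y" if "(x,y) \<in> F'" for x y using good_arc[OF gd] F'H that by blast
  have succP: "A y \<le> A z" if "(x,y) \<in> F'" "(x,z) \<in> sc H" "A x < A z" for x y z
    using FS that unfolding Succ_def by blast
  have "{(u,w). (u,w) \<in> F' \<and> (u \<in> ?C \<or> w \<in> ?C)} = set (zip vs (tl vs))"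
  proof (intro set_eqI iffI)
    fix e assume "e \<in> {(u,w). (u,w) \<in> F' \<and> (u \<in> ?C \<or> w \<in> ?C)}"
    then obtain x y where e: "e = (x,y)" "(x,y) \<in> F'" "x \<in> ?C \<or> y \<in> ?C" by blast
    have xy: "x \<in> ?C" "y \<in> ?C" using inC e by blast+
    have "\<not>(\<exists>z\<in>?C. A x < A z \<and> A z < A y)"
    proof
      assume "\<exists>z\<in>?C. A x < A z \<and> A z < A y"
      then obtain z where z: "z \<in> ?C" "A x < A z" "A z < A y" by blast
      then have "A y \<le> A z" using succP[OF e(2) CH[OF xy(1) z(1)] z(2)] by simp
      then show False using z by simp
    qed
    then show "e \<in> set (zip vs (tl vs))" using zip_sorted[OF vs(2)] vs(1) xy arcA[OF e(2)] e(1) by simp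
  next
    fix e assume e0: "e \<in> set (zip vs (tl vs))"
    obtain x y where e1: "e = (x,y)" by (cases e)
    have e: "e = (x,y)" "(x,y) \<in> set (zip vs (tl vs))" using e0 e1 by auto
    then have h: "x \<in> ?C" "y \<in> ?C" "A x < A y" "\<not>(\<exists>z\<in>?C. A x < A z \<and> A z < A y)"
      using zip_sorted[OF vs(2)] vs(1) by auto
    have "\<exists>x' y'. (x',y') \<in> F' \<and> x' \<in> ?C \<and> A x' \<le> A x \<and> y' \<in> ?C \<and> A x < A y'"
    proof (rule ccontr)
      assume nc: "\<not> (\<exists>x' y'. (x',y') \<in> F' \<and> x' \<in> ?C \<and> A x' \<le> A x \<and> y' \<in> ?C \<and> A x < A y')"
      have inv: "(A w \<le> A x) = (A v \<le> A x)" if "(v,w) \<in> sc F'" for w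
        using that
      proof (induction rule: rtrancl_induct)
        case base then show ?case by simp
      next
        case (step w z)
        have wC: "w \<in> ?C" using step.hyps(1) unfolding ucomp_def by simp
        have zC: "z \<in> ?C" using step.hyps(1,2) unfolding ucomp_def by (meson rtrancl.rtrancl_into_rtrancl mem_Collect_eq)
        have "(A z \<le> A x) = (A w \<le> A x)"
        proof (cases "(w,z) \<in> F'")
          case True
          then have "A w < A z" by (rule arcA)
          then show ?thesis using nc True wC zC by force
        next
          case False
          then have "(z,w) \<in> F'" using step.hyps(2) by auto
          then have "A z < A w" by (rule arcA)
          then show ?thesis using nc \<open>(z,w) \<in> F'\<close> wC zC by force
        qed
        then show ?case using step.IH by simp
      qed
      have "A v \<le> A x" using inv[OF Cc[OF h(1)]] by simp
      moreover have "(A y \<le> A x) = (A v \<le> A x)" using inv[OF Cc[OF h(2)]] .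
      ultimately show False using h(3) by simp
    qed
    then obtain x' y' where c: "(x',y') \<in> F'" "x' \<in> ?C" "A x' \<le> A x" "y' \<in> ?C" "A x < A y'" by blast
    have "A y' \<le> A y" using succP[OF c(1) CH[OF c(2) h(2)]] c(3) h(3) by simp
    moreover have "\<not> A y' < A y" using h(4) c(4,5) by blast
    ultimately have "A y' = A y" by simp
    then have yy: "y' = y" using injc[OF CH[OF c(4) h(2)]] by simp
    have xx: "x' = x"
    proof (rule ccontr)
      assume "x' \<noteq> x"
      then have "A x' \<noteq> A x" using injc[OF CH[OF c(2) h(1)]] by auto
      then have "A x' < A x" using c(3) by simp
      then have "A y' \<le> A x" using succP[OF c(1) CH[OF c(2) h(1)]] by simp
      then show False using c(5) by simp
    qed
    show "e \<in> {(u,w). (u,w) \<in> F' \<and> (u \<in> ?C \<or> w \<in> ?C)}" using c(1) xx yy e(1) h(1) by simp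
  qed
  then show ?thesis unfolding is_dipath_def using vs by blast
qed

end

theorem lemma2:
  fixes A :: "nat \<Rightarrow> real" and n :: nat
    and L Rts R :: "nat list" and F H F' :: "(nat \<times> nat) set" and H1 :: "(nat \<times> nat) set"
  assumes "inj_on A {1..n}"
    and "distinct L" and "set L = {1..n}"
    and "dfs_forest A (reach_one_graph A n) L F"
    and "merge_subtrees A {1..n} F H1"
    and "distinct Rts" and "set Rts = forest_roots {1..n} F"
    and "merge_step A H1 Rts H R"
    and "dfs_forest A H R F'"
  shows "\<forall>v \<in> {1..n}. is_dipath F' (ucomp F' v)"
proof -
  let ?V = "{1..n} :: nat set"
  let ?G = "reach_one_graph A n"
  have GV: "u \<in> ?V \<and> w \<in> ?V \<and> A u < A w" if "(u,w) \<in> ?G" for u w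
    using that unfolding reach_one_graph_def by auto
  have GVV: "?G \<subseteq> ?V \<times> ?V" using GV by auto
  have finV: "finite ?V" by simp
  have outs: "\<And>u. set (out_list A ?G u) \<subseteq> {w. (u,w) \<in> ?G}"
    using out_list_set[OF assms(1) GVV finV] by simp
  obtain S where run: "dfs_run A ?G L ({},{}) (S,F)" using assms(4) unfolding dfs_forest_def by blast
  have "ginv ?G {} {}" unfolding ginv_def by simp
  then have gi: "ginv ?G S F" using dfs_run_G_inv[OF outs run] by simp
  have FG: "F \<subseteq> ?G" and indeg: "\<And>x x' y. (x,y)\<in>F \<Longrightarrow> (x',y)\<in>F \<Longrightarrow> x = x'"
    using gi unfolding ginv_def by blast+
  interpret fc: forest_ctx A ?V ?G F
    by unfold_locales (use finV assms(1) GV nb_G FG indeg in blast)+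
  have H1: "good A ?V H1" "\<forall>r\<in>forest_roots ?V F. \<forall>r'\<in>forest_roots ?V F. (r,r') \<in> sc H1 \<longrightarrow> r = r'"
    using fc.H1_good[OF assms(5)] by blast+
  have "set Rts \<subseteq> ?V" using assms(7) unfolding forest_roots_def by auto
  then have gH: "good A ?V H"
    using ms_good[OF assms(8) H1(1) assms(1) finV _ assms(6)] H1(2) assms(7) by blast
  interpret gc: good_ctx A ?V H by unfold_locales (use gH assms(1) finV in blast)+
  have "F' \<subseteq> gc.Succ" using gc.forest_Succ[OF assms(9)] .
  then show ?thesis using gc.dipath by blast
qed

end
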